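(* Let $N$ be a positive integer, let $\omega$ be a nonconstant finite Blaschke product of order $n\le N$, and let $c>0$. Define $\psi$ on $\mathbb{T}$ (a.e.) by $\psi(\zeta)=\frac{2c}{\pi}\operatorname{Arg}\left(\frac{1+\omega(\zeta)}{1-\omega(\zeta)}\right)$, i.e. $\psi=2\operatorname{Re} h$ on $\mathbb{T}$ where $h=\frac{c}{\pi i}\operatorname{Log}\left(\frac{1+\omega}{1-\omega}\right)$. Then $\psi$ is an alternating step function of height $c$ and order $n$, and, letting $A=(\hat\psi(j-k))_{j,k=0}^N$, $\psi$ is the function of minimum $L^\infty$-norm in $\mathcal{G}_A$; that is, $\|\psi\|_\infty = c = c_A$.
   Context: $\mathbb{T}$ is the unit circle with normalized Lebesgue measure; $\hat f(n)=\frac{1}{2\pi}\int_0^{2\pi} f(e^{i\theta})e^{-in\theta}\,d\theta$. $\operatorname{Log}$ and $\operatorname{Arg}$ denote principal branches. For an $(N+1)\times(N+1)$ Toeplitz matrix $A=(a_{j-k})_{j,k=0}^N$, $\mathcal{G}_A$ is the set of $f\in L^\infty(\mathbb{T})$ with $\hat f(m)=a_m$ for $m=-N,\dots,N$, and $c_A=\min\{\|f\|_\infty: f\in\mathcal{G}_A\}$. For $c>0$ and $n$ a positive integer, an alternating step function of height $c$ and order $n$ is a function in $L^\infty(\mathbb{T})$ that assumes (a.e.) alternately the values $c$ and $-c$ on $2n$ (nondegenerate) subarcs forming a partition of $\mathbb{T}$. *)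

theory Defs
  imports "HOL-Analysis.Analysis"
begin

text \<open>Functions on the unit circle T are represented as functions complex => complex,
  evaluated at cis theta; the normalized Lebesgue measure on T corresponds to
  Lebesgue measure on [0, 2 pi] divided by 2 pi.\<close>

definition blaschke :: "complex \<Rightarrow> (nat \<Rightarrow> complex) \<Rightarrow> nat \<Rightarrow> complex \<Rightarrow> complex" where
  "blaschke lam a n z = lam * (\<Prod>k<n. (z - a k) / (1 - cnj (a k) * z))"

definition is_blaschke :: "complex \<Rightarrow> (nat \<Rightarrow> complex) \<Rightarrow> nat \<Rightarrow> bool" where
  "is_blaschke lam a n \<longleftrightarrow> norm lam = 1 \<and> (\<forall>k<n. norm (a k) < 1)"

definition Linf :: "(complex \<Rightarrow> complex) \<Rightarrow> bool" where
  "Linf f \<longleftrightarrow> (\<lambda>\<theta>. f (cis \<theta>)) \<in> borel_measurable (restrict_space lborel {0..2*pi})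
      \<and> (\<exists>M. AE \<theta> in lborel. \<theta> \<in> {0..2*pi} \<longrightarrow> norm (f (cis \<theta>)) \<le> M)"

definition ess_norm :: "(complex \<Rightarrow> complex) \<Rightarrow> real" where
  "ess_norm f = Inf {M. AE \<theta> in lborel. \<theta> \<in> {0..2*pi} \<longrightarrow> norm (f (cis \<theta>)) \<le> M}"

definition fourier :: "(complex \<Rightarrow> complex) \<Rightarrow> int \<Rightarrow> complex" where
  "fourier f m = (1 / (2 * pi)) * (LINT \<theta>:{0..2*pi}|lborel. f (cis \<theta>) * cis (- (of_int m * \<theta>)))"

definition G_set :: "(nat \<Rightarrow> nat \<Rightarrow> complex) \<Rightarrow> nat \<Rightarrow> (complex \<Rightarrow> complex) set" where
  "G_set A N = {f. Linf f \<and> (\<forall>j\<le>N. \<forall>k\<le>N. fourier f (int j - int k) = A j k)}"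

definition c_A :: "(nat \<Rightarrow> nat \<Rightarrow> complex) \<Rightarrow> nat \<Rightarrow> real" where
  "c_A A N = Inf (ess_norm ` G_set A N)"

definition alt_step :: "(complex \<Rightarrow> complex) \<Rightarrow> real \<Rightarrow> nat \<Rightarrow> bool" where
  "alt_step f c n \<longleftrightarrow> (\<exists>t :: nat \<Rightarrow> real. \<exists>s :: real. (s = 1 \<or> s = -1)
      \<and> (\<forall>k<2*n. t k < t (Suc k)) \<and> t (2*n) = t 0 + 2*pi
      \<and> (\<forall>k<2*n. AE \<theta> in lborel. \<theta> \<in> {t k<..<t (Suc k)} \<longrightarrow>
            f (cis \<theta>) = complex_of_real (s * (-1)^k * c)))"

end

theory Submission
  imports Defs "HOL-Computational_Algebra.Polynomial"
begin


definition hf :: "complex \<Rightarrow> real \<Rightarrow> real" where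
  "hf a t = t + 2 * Arg (1 - a * cis (-t))"

lemma Re_u_pos: assumes "norm a < 1" shows "Re (1 - a * cis (-t)) > 0"
proof -
  have "Re (a * cis (-t)) \<le> norm (a * cis (-t))" by (rule complex_Re_le_cmod)
  also have "\<dots> = norm a" by (simp add: norm_mult)
  finally show ?thesis using assms by simp
qed

lemma div_cnj_cis: assumes "u \<noteq> 0" shows "u / cnj u = cis (2 * Arg u)"
proof -
  have u: "u = complex_of_real (norm u) * cis (Arg u)"
    using rcis_cmod_Arg[of u] by (simp add: rcis_def)
  have c: "cnj u = complex_of_real (norm u) * cis (- Arg u)"
    by (subst u) (simp add: cis_cnj)
  have "u / cnj u = cis (Arg u) / cis (- Arg u)"
    using assms by (subst c, subst (1) u) (simp add: field_simps)
  also have "\<dots> = cis (2 * Arg u)" by (simp add: cis_divide)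
  finally show ?thesis .
qed

lemma factor_cis: assumes "norm a < 1"
  shows "(cis t - a) / (1 - cnj a * cis t) = cis (hf a t)"
proof -
  define u where "u = 1 - a * cis (-t)"
  have r: "Re u > 0" unfolding u_def by (rule Re_u_pos[OF assms])
  have u0: "u \<noteq> 0" using r by auto
  have e1: "cis t - a = cis t * u" unfolding u_def
    by (simp add: algebra_simps cis_mult)
  have e2: "1 - cnj a * cis t = cnj u" unfolding u_def by (simp add: cis_cnj)
  have "(cis t - a) / (1 - cnj a * cis t) = cis t * (u / cnj u)"
    by (simp add: e1 e2)
  also have "\<dots> = cis (t + 2 * Arg u)" using u0
    by (simp add: div_cnj_cis cis_mult)
  also have "\<dots> = cis (hf a t)" by (simp add: hf_def u_def)
  finally show ?thesis .
qed

lemma inv_aux: fixes R I N :: real assumes "R > 0"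
  shows "inverse (1 + (I / R)^2) * (N / (R * R)) = N / (R^2 + I^2)"
proof -
  have "1 + (I / R)^2 = (R^2 + I^2) / R^2" using assms by (simp add: field_simps power2_eq_square)
  moreover have "R^2 + I^2 > 0" using assms by (simp add: add_pos_nonneg)
  ultimately show ?thesis using assms by (simp add: field_simps power2_eq_square)
qed

lemma aux2: fixes D N K :: real assumes "D + 2 * N = K" "D > 0"
  shows "1 + 2 * N / D = K / D"
  using assms by (simp add: field_simps)

lemma hf_arctan: assumes "norm a < 1"
  shows "hf a t = t + 2 * arctan ((Re a * sin t - Im a * cos t) / (1 - Re a * cos t - Im a * sin t))"
proof -
  have "Arg (1 - a * cis (-t)) = arctan (Im (1 - a * cis (-t)) / Re (1 - a * cis (-t)))"
    using Re_u_pos[OF assms] by (rule arg_conv_arctan)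
  then show ?thesis by (simp add: hf_def cis.ctr diff_diff_eq)
qed

lemma hf_deriv: assumes "norm a < 1"
  shows "(hf a has_real_derivative
     (1 - (Re a)^2 - (Im a)^2) / ((1 - Re a * cos t - Im a * sin t)^2 + (Re a * sin t - Im a * cos t)^2)) (at t)"
proof -
  define x where "x = Re a" define y where "y = Im a"
  define R where "R = (\<lambda>t. 1 - x * cos t - y * sin t)"
  define I where "I = (\<lambda>t. x * sin t - y * cos t)"
  have Rpos: "R s > 0" for s using Re_u_pos[OF assms, of s] by (simp add: R_def x_def y_def cis.ctr)
  have eq: "hf a = (\<lambda>t. t + 2 * arctan (I t / R t))"
    by (rule ext) (simp add: hf_arctan[OF assms] I_def R_def x_def y_def)
  have dI: "DERIV I t :> x * cos t + y * sin t" unfolding I_def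
    by (auto intro!: derivative_eq_intros)
  have dR: "DERIV R t :> x * sin t - y * cos t" unfolding R_def
    by (auto intro!: derivative_eq_intros)
  have dQ: "DERIV (\<lambda>t. I t / R t) t :> ((x * cos t + y * sin t) * R t - I t * (x * sin t - y * cos t)) / (R t * R t)"
    by (rule DERIV_divide[OF dI dR]) (use Rpos[of t] in auto)
  have dA: "DERIV (\<lambda>t. arctan (I t / R t)) t :> inverse (1 + (I t / R t)^2) * (((x * cos t + y * sin t) * R t - I t * (x * sin t - y * cos t)) / (R t * R t))"
    by (rule DERIV_chain2[OF DERIV_arctan dQ])
  have d0: "DERIV (\<lambda>t. t + 2 * arctan (I t / R t)) t :> 1 + 2 * (inverse (1 + (I t / R t)^2) * (((x * cos t + y * sin t) * R t - I t * (x * sin t - y * cos t)) / (R t * R t)))"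
    by (rule DERIV_add[OF DERIV_ident DERIV_cmult[OF dA]])
  have d: "((\<lambda>t. t + 2 * arctan (I t / R t)) has_real_derivative
     1 + 2 * ((x * cos t + y * sin t) * R t - I t * (x * sin t - y * cos t)) / ((R t)^2 + (I t)^2)) (at t)"
    using d0 by (subst (asm) inv_aux[OF Rpos]) (simp only: times_divide_eq_right)
  have "1 + 2 * ((x * cos t + y * sin t) * R t - I t * (x * sin t - y * cos t)) / ((R t)^2 + (I t)^2)
      = (1 - x^2 - y^2) / ((R t)^2 + (I t)^2)"
  proof -
    have pos: "(R t)^2 + (I t)^2 > 0" using Rpos[of t] by (simp add: add_pos_nonneg)
    have "(R t)^2 + (I t)^2 + 2 * ((x * cos t + y * sin t) * R t - I t * (x * sin t - y * cos t)) = 1 - x^2 - y^2"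
    proof -
      have XI: "(x* cos t + y* sin t)^2 + (x* sin t - y* cos t)^2 = x^2 + y^2"
      proof -
        have "(x* cos t + y* sin t)^2 + (x* sin t - y* cos t)^2 = (x^2+y^2)*((sin t)^2 + (cos t)^2)"
          by algebra
        then show ?thesis by simp
      qed
      have "(R t)^2 + (I t)^2 + 2 * ((x * cos t + y * sin t) * R t - I t * (x * sin t - y * cos t))
          = 1 - ((x* cos t + y* sin t)^2 + (x* sin t - y* cos t)^2)"
        unfolding R_def I_def by (simp add: power2_eq_square algebra_simps)
      then show ?thesis using XI by simp
    qed
    then show ?thesis using pos by (intro aux2) auto
  qed
  with d show ?thesis unfolding eq R_def I_def x_def y_def by simp
qed


lemma hf_deriv_pos: assumes "norm a < 1" shows "\<exists>D>0. (hf a has_real_derivative D) (at t)"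
proof -
  define D where "D = (1 - (Re a)^2 - (Im a)^2) / ((1 - Re a * cos t - Im a * sin t)^2 + (Re a * sin t - Im a * cos t)^2)"
  have "(Re a)^2 + (Im a)^2 < 1"
    using assms by (simp add: cmod_def)
  moreover have "(1 - Re a * cos t - Im a * sin t)^2 + (Re a * sin t - Im a * cos t)^2 > 0"
    using Re_u_pos[OF assms, of t] by (simp add: cis.ctr add_pos_nonneg diff_diff_eq)
  ultimately have "D > 0" unfolding D_def by (intro divide_pos_pos) auto
  moreover have "(hf a has_real_derivative D) (at t)" unfolding D_def by (rule hf_deriv[OF assms])
  ultimately show ?thesis by blast
qed

lemma hf_mono: assumes "norm a < 1" "s < t" shows "hf a s < hf a t"
  using assms(2) by (rule DERIV_pos_imp_increasing) (use hf_deriv_pos[OF assms(1)] in auto)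

lemma hf_cont: assumes "norm a < 1" shows "isCont (hf a) t"
  using hf_deriv_pos[OF assms, of t] DERIV_isCont by blast

lemma hf_periodic: "hf a (t + 2 * pi) = hf a t + 2 * pi"
proof -
  have "cis (- (t + 2 * pi)) = cis (- t)"
    by (simp add: complex_eq_iff cos_diff sin_diff)
  then show ?thesis by (simp add: hf_def)
qed




definition Phi :: "complex \<Rightarrow> (nat \<Rightarrow> complex) \<Rightarrow> nat \<Rightarrow> real \<Rightarrow> real" where
  "Phi lam a n t = Arg lam + (\<Sum>k<n. hf (a k) t)"

lemma prod_cis: "finite A \<Longrightarrow> (\<Prod>k\<in>A. cis (f k)) = cis (\<Sum>k\<in>A. f k)"
  by (induction A rule: finite_induct) (auto simp: cis_mult)

lemma blaschke_cis: assumes "is_blaschke lam a n"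
  shows "blaschke lam a n (cis t) = cis (Phi lam a n t)"
proof -
  have l: "norm lam = 1" and a: "\<And>k. k < n \<Longrightarrow> norm (a k) < 1"
    using assms by (auto simp: is_blaschke_def)
  have l0: "lam \<noteq> 0" using l by auto
  have lam: "lam = cis (Arg lam)" using l cis_Arg[OF l0] by (simp add: sgn_div_norm)
  have "blaschke lam a n (cis t) = lam * (\<Prod>k<n. cis (hf (a k) t))"
    unfolding blaschke_def by (simp add: factor_cis a)
  also have "\<dots> = cis (Arg lam) * cis (\<Sum>k<n. hf (a k) t)" by (subst lam) (simp add: prod_cis)
  also have "\<dots> = cis (Phi lam a n t)" by (simp add: Phi_def cis_mult)
  finally show ?thesis .
qed

lemma Phi_mono: assumes "is_blaschke lam a n" "1 \<le> n" "s < t"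
  shows "Phi lam a n s < Phi lam a n t"
proof -
  have a: "\<And>k. k < n \<Longrightarrow> norm (a k) < 1" using assms by (auto simp: is_blaschke_def)
  have "(\<Sum>k<n. hf (a k) s) < (\<Sum>k<n. hf (a k) t)"
  proof (rule sum_strict_mono)
    have "0 \<in> {..<n}" using assms(2) by simp
    then show "{..<n} \<noteq> {}" by blast
    fix k assume "k \<in> {..<n}"
    then show "hf (a k) s < hf (a k) t" using hf_mono[OF a assms(3)] by simp
  qed simp
  then show ?thesis by (simp add: Phi_def)
qed

lemma Phi_cont: assumes "is_blaschke lam a n" shows "isCont (Phi lam a n) t"
proof -
  have a: "\<And>k. k < n \<Longrightarrow> norm (a k) < 1" using assms by (auto simp: is_blaschke_def)
  have "isCont (\<lambda>t. \<Sum>k<n. hf (a k) t) t"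
    by (rule isCont_sum) (simp add: hf_cont a)
  then show ?thesis unfolding Phi_def[abs_def] by (rule isCont_add[OF continuous_const])
qed

lemma Phi_periodic: "Phi lam a n (t + 2 * pi) = Phi lam a n t + 2 * pi * n"
  by (simp add: Phi_def hf_periodic sum.distrib)

lemma quot_cis: fixes p :: real shows "(1 + cis p) / (1 - cis p) = \<i> * complex_of_real (sin p / (1 - cos p))"
proof (cases "cos p = 1")
  case True
  then have "sin p = 0" using sin_cos_squared_add[of p] by (simp add: power2_eq_square)
  with True have "cis p = 1" by (simp add: complex_eq_iff)
  then show ?thesis using True by simp
next
  case False
  then have c: "1 - cos p \<noteq> 0" by simp
  have d: "1 - cis p \<noteq> 0" using False by (auto simp: complex_eq_iff)
  define r where "r = sin p / (1 - cos p)"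
  have ss: "sin p * sin p = (1 - cos p) * (1 + cos p)"
    using sin_squared_eq[of p] by (simp add: power2_eq_square algebra_simps)
  have re: "r * sin p = 1 + cos p"
  proof -
    have "r * sin p = (sin p * sin p) / (1 - cos p)" by (simp add: r_def)
    also have "\<dots> = 1 + cos p" using c by (simp add: ss)
    finally show ?thesis .
  qed
  have im: "r * (1 - cos p) = sin p" using c by (simp add: r_def)
  have e1: "\<i> * complex_of_real r * (1 - cis p) = Complex (r * sin p) (r * (1 - cos p))"
    by (simp add: complex_eq_iff algebra_simps)
  have e2: "1 + cis p = Complex (1 + cos p) (sin p)" by (simp add: complex_eq_iff)
  have eq: "1 + cis p = \<i> * complex_of_real r * (1 - cis p)"
    by (simp only: e1 e2 re im)
  have "(1 + cis p) / (1 - cis p) = \<i> * complex_of_real r"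
    using d by (subst eq) simp
  then show ?thesis by (simp only: r_def)
qed

lemma Arg_ii_real: "Arg (\<i> * complex_of_real r) = pi / 2 * sgn r"
proof -
  consider "r > 0" | "r < 0" | "r = 0" by linarith
  then show ?thesis
  proof cases
    case 1
    have "Arg (\<i> * complex_of_real r) = Arg \<i>"
    proof -
      have "Arg (\<i> * complex_of_real r) = Arg (complex_of_real r * \<i>)" by (subst mult.commute) (rule refl)
      also have "\<dots> = Arg \<i>" using 1 by (rule Arg_times_of_real)
      finally show ?thesis .
    qed
    then show ?thesis using 1 by simp
  next
    case 2
    have eqn: "\<i> * complex_of_real r = complex_of_real (- r) * (- \<i>)" by simp
    have "Arg (\<i> * complex_of_real r) = Arg (complex_of_real (- r) * (- \<i>))" by (simp only: eqn)
    also have "\<dots> = Arg (- \<i>)" by (rule Arg_times_of_real) (use 2 in simp)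
    finally show ?thesis using 2 by simp
  next
    case 3 then show ?thesis by (simp add: Arg_zero)
  qed
qed

lemma sgn_quot: fixes p :: real shows "sgn (sin p / (1 - cos p)) = sgn (sin p)"
proof (cases "cos p = 1")
  case True
  then have "sin p = 0" using sin_cos_squared_add[of p] by (simp add: power2_eq_square)
  then show ?thesis by simp
next
  case False
  then have "1 - cos p > 0" using cos_le_one[of p] by linarith
  then show ?thesis by (simp add: sgn_if zero_less_divide_iff divide_less_0_iff)
qed

lemma psi_formula: fixes p :: real assumes "0 < c"
  shows "complex_of_real (2 * c / pi * Arg ((1 + cis p) / (1 - cis p))) = complex_of_real (c * sgn (sin p))"
proof -
  have "Arg ((1 + cis p) / (1 - cis p)) = Arg (\<i> * complex_of_real (sin p / (1 - cos p)))"
    by (simp only: quot_cis)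
  also have "\<dots> = pi / 2 * sgn (sin p / (1 - cos p))" by (rule Arg_ii_real)
  also have "\<dots> = pi / 2 * sgn (sin p)" by (simp only: sgn_quot)
  finally have e: "Arg ((1 + cis p) / (1 - cis p)) = pi / 2 * sgn (sin p)" .
  have "2 * c / pi * (pi / 2 * sgn (sin p)) = c * sgn (sin p)" using pi_gt_zero by (simp add: field_simps)
  then show ?thesis by (simp only: e)
qed




lemma cos_int_pi: "cos (of_int j * pi) = (if even j then 1 else -1)"
proof (cases "j \<ge> 0")
  case True
  then obtain k where k: "j = int k" by (metis nonneg_int_cases)
  have "cos (of_int j * pi) = (-1) ^ k" using cos_npi[of k] by (simp add: k)
  then show ?thesis by (simp add: k)
next
  case False
  then obtain k where k: "j = - int k" by (metis neg_int_cases less_le not_le)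
  have "cos (of_int j * pi) = cos (real k * pi)" by (simp add: k)
  also have "\<dots> = (-1) ^ k" by (rule cos_npi)
  finally show ?thesis by (simp add: k)
qed

lemma sin_int_pi: "sin (of_int j * pi) = 0"
  by (simp add: sin_times_pi_eq_0)

lemma sgn_sin_int: fixes j :: int
  assumes "of_int j * pi < x" "x < (of_int j + 1) * pi"
  shows "sgn (sin x) = (if even j then 1 else -1)"
proof -
  define y where "y = x - of_int j * pi"
  have y: "0 < y" "y < pi" using assms by (auto simp: y_def algebra_simps)
  have sy: "sin y > 0" using y by (rule sin_gt_zero)
  have "sin x = sin (y + of_int j * pi)" by (simp add: y_def)
  also have "\<dots> = sin y * cos (of_int j * pi)" by (simp add: sin_add sin_int_pi)
  finally have "sin x = sin y * (if even j then 1 else -1)" by (simp add: cos_int_pi)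
  then show ?thesis using sy by (auto simp: sgn_if)
qed

lemma parity_aux: fixes m :: int
  shows "(if even (m + int k) then 1 else -1 :: real) = (if even m then 1 else -1) * (-1) ^ k"
  by (cases "even m"; cases "even k") (auto simp: even_add)

lemma alt_step_main:
  assumes bl: "is_blaschke lam a n" and n: "1 \<le> n" and c: "0 < c"
    and psi: "\<And>\<theta>. \<psi> (cis \<theta>) = complex_of_real (c * sgn (sin (Phi lam a n \<theta>)))"
  shows "alt_step \<psi> c n"
proof -
  define P where "P = Phi lam a n"
  have cont: "\<And>x. isCont P x" unfolding P_def by (rule Phi_cont[OF bl])
  have mono: "\<And>x y. x < y \<Longrightarrow> P x < P y" unfolding P_def by (rule Phi_mono[OF bl n])
  have le_iff: "P x \<le> P y \<longleftrightarrow> x \<le> y" for x y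
    using mono[of x y] mono[of y x] by (cases "x < y"; cases "y < x") auto
  have inj: "\<And>x y. P x = P y \<Longrightarrow> x = y" by (metis le_iff order_antisym order_refl)
  have per: "\<And>x. P (x + 2 * pi) = P x + 2 * pi * n" unfolding P_def by (rule Phi_periodic)
  define m where "m = \<lceil>P 0 / pi\<rceil>"
  have m1: "P 0 \<le> of_int m * pi"
  proof -
    have "P 0 / pi \<le> of_int m" unfolding m_def by (rule le_of_int_ceiling)
    then show ?thesis using pi_gt_zero by (simp add: divide_le_eq)
  qed
  have m2: "of_int m * pi < P 0 + pi"
  proof -
    have "of_int m < P 0 / pi + 1" unfolding m_def using ceiling_correct[of "P 0 / pi"] by linarith
    then show ?thesis using pi_gt_zero by (simp add: field_simps)
  qed
  have nn: "2 * pi \<le> 2 * pi * real n" using n pi_gt_zero by simp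
  have P2: "P (2 * pi) = P 0 + 2 * pi * n" using per[of 0] by simp
  obtain t0 where t0: "0 \<le> t0" "t0 \<le> 2 * pi" "P t0 = of_int m * pi"
    using IVT[of P 0 "of_int m * pi" "2 * pi"] m1 m2 P2 nn cont pi_gt_zero by force
  have ex: "\<forall>k. \<exists>x. k \<le> 2 * n \<longrightarrow> t0 \<le> x \<and> x \<le> t0 + 2 * pi \<and> P x = (of_int m + real k) * pi"
  proof
    fix k
    show "\<exists>x. k \<le> 2 * n \<longrightarrow> t0 \<le> x \<and> x \<le> t0 + 2 * pi \<and> P x = (of_int m + real k) * pi"
    proof (cases "k \<le> 2 * n")
      case True
      have "P t0 \<le> (of_int m + real k) * pi" using t0 pi_gt_zero by (simp add: distrib_right)
      moreover have "(of_int m + real k) * pi \<le> P (t0 + 2 * pi)"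
      proof -
        have "real k * pi \<le> 2 * pi * real n" using True pi_gt_zero
          by (metis mult.commute mult.left_commute mult_right_mono of_nat_le_iff of_nat_mult of_nat_numeral less_le)
        then show ?thesis using per[of t0] t0 by (simp add: distrib_right)
      qed
      ultimately obtain x where "t0 \<le> x" "x \<le> t0 + 2 * pi" "P x = (of_int m + real k) * pi"
        using IVT[of P t0 "(of_int m + real k) * pi" "t0 + 2 * pi"] cont pi_gt_zero by force
      then show ?thesis by blast
    qed simp
  qed
  then obtain t where t: "\<And>k. k \<le> 2 * n \<Longrightarrow> t0 \<le> t k \<and> t k \<le> t0 + 2 * pi \<and> P (t k) = (of_int m + real k) * pi"
    by metis
  have Pt: "\<And>k. k \<le> 2 * n \<Longrightarrow> P (t k) = (of_int m + real k) * pi" using t by blast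
  have t00: "t 0 = t0" using Pt[of 0] t0(3) inj by simp
  have t2n: "t (2 * n) = t 0 + 2 * pi"
  proof -
    have "P (t (2 * n)) = P (t0 + 2 * pi)" using Pt[of "2 * n"] per[of t0] t0(3) by (simp add: algebra_simps)
    then show ?thesis using inj t00 by simp
  qed
  have tinc: "\<And>k. k < 2 * n \<Longrightarrow> t k < t (Suc k)"
  proof -
    fix k assume k: "k < 2 * n"
    have "P (t k) < P (t (Suc k))" using Pt[of k] Pt[of "Suc k"] k pi_gt_zero by (simp add: distrib_right)
    then show "t k < t (Suc k)" using le_iff not_le by blast
  qed
  define s :: real where "s = (if even m then 1 else -1)"
  have val: "\<psi> (cis \<theta>) = complex_of_real (s * (-1) ^ k * c)"
    if k: "k < 2 * n" and th: "\<theta> \<in> {t k<..<t (Suc k)}" for k \<theta>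
  proof -
    have "P (t k) < P \<theta>" "P \<theta> < P (t (Suc k))" using th mono by auto
    then have "of_int (m + int k) * pi < P \<theta>" "P \<theta> < (of_int (m + int k) + 1) * pi"
      using Pt[of k] Pt[of "Suc k"] k by (simp_all add: algebra_simps)
    then have "sgn (sin (P \<theta>)) = (if even (m + int k) then 1 else -1)" by (rule sgn_sin_int)
    then show ?thesis using psi[of \<theta>] by (simp add: P_def s_def parity_aux mult_ac)
  qed
  show ?thesis unfolding alt_step_def
  proof (intro exI conjI allI impI)
    show "s = 1 \<or> s = -1" by (simp add: s_def)
    show "\<And>k. k < 2 * n \<Longrightarrow> t k < t (Suc k)" by (rule tinc)
    show "t (2 * n) = t 0 + 2 * pi" by (rule t2n)
    fix k assume "k < 2 * n"
    then show "AE \<theta> in lborel. \<theta> \<in> {t k<..<t (Suc k)} \<longrightarrow> \<psi> (cis \<theta>) = complex_of_real (s * (-1) ^ k * c)"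
      by (intro AE_I2 impI) (rule val)
  qed
qed




abbreviation MT :: "real measure" where "MT \<equiv> restrict_space lborel {0..2*pi}"

lemma MT_sets: "{0..2*pi} \<inter> space lborel \<in> sets lborel" by simp

lemma finite_MT: "finite_measure MT"
proof (rule finite_measureI)
  have "emeasure MT (space MT) = emeasure lborel {0..2*pi}"
    by (simp add: emeasure_restrict_space)
  also have "\<dots> = ennreal (2 * pi)" by simp
  finally show "emeasure MT (space MT) \<noteq> \<infinity>" by simp
qed

lemma LINT_MT: fixes F :: "real \<Rightarrow> complex" shows "(LINT \<theta>:{0..2*pi}|lborel. F \<theta>) = integral\<^sup>L MT F"
  unfolding set_lebesgue_integral_def by (rule integral_restrict_space[OF MT_sets, symmetric])

lemma cont_bounded_MT:
  fixes k :: "real \<Rightarrow> 'b::real_normed_vector"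
  assumes "continuous_on UNIV k" shows "\<exists>B. \<forall>\<theta>\<in>{0..2*pi}. norm (k \<theta>) \<le> B"
proof -
  have "compact (k ` {0..2*pi})"
    by (rule compact_continuous_image) (auto intro: continuous_on_subset[OF assms])
  then have "bounded (k ` {0..2*pi})" by (rule compact_imp_bounded)
  then show ?thesis by (auto simp: bounded_iff)
qed

lemma Linf_integrable:
  fixes k :: "real \<Rightarrow> complex"
  assumes f: "Linf f" and k: "continuous_on UNIV k"
  shows "integrable MT (\<lambda>\<theta>. f (cis \<theta>) * k \<theta>)"
proof -
  from f obtain M where M: "AE \<theta> in lborel. \<theta> \<in> {0..2*pi} \<longrightarrow> norm (f (cis \<theta>)) \<le> M"
    and fm: "(\<lambda>\<theta>. f (cis \<theta>)) \<in> borel_measurable MT" unfolding Linf_def by blast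
  obtain B where B: "\<forall>\<theta>\<in>{0..2*pi}. norm (k \<theta>) \<le> B" using cont_bounded_MT[OF k] by blast
  have km: "k \<in> borel_measurable MT"
    by (rule measurable_restrict_space1) (use borel_measurable_continuous_onI[OF k] in simp)
  have "AE \<theta> in MT. norm (f (cis \<theta>) * k \<theta>) \<le> max M 0 * max B 0"
  proof -
    have "AE \<theta> in lborel. \<theta> \<in> {0..2*pi} \<longrightarrow> norm (f (cis \<theta>) * k \<theta>) \<le> max M 0 * max B 0"
      using M
    proof eventually_elim
      case (elim \<theta>)
      show ?case
      proof
        assume th: "\<theta> \<in> {0..2*pi}"
        have "norm (f (cis \<theta>) * k \<theta>) = norm (f (cis \<theta>)) * norm (k \<theta>)" by (simp add: norm_mult)
        also have "\<dots> \<le> max M 0 * max B 0"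
          using elim th B by (intro mult_mono) (auto intro: le_max_iff_disj[THEN iffD2])
        finally show "norm (f (cis \<theta>) * k \<theta>) \<le> max M 0 * max B 0" .
      qed
    qed
    then show ?thesis by (subst AE_restrict_space_iff[OF MT_sets])
  qed
  moreover have "(\<lambda>\<theta>. f (cis \<theta>) * k \<theta>) \<in> borel_measurable MT"
    using fm km by (rule borel_measurable_times)
  ultimately show ?thesis by (rule finite_measure.integrable_const_bound[OF finite_MT])
qed

lemma fourier_int:
  "integral\<^sup>L MT (\<lambda>\<theta>. f (cis \<theta>) * cis (of_int m * \<theta>)) = 2 * pi * fourier f (- m)"
  by (simp add: fourier_def LINT_MT)

lemma trig_int_eq:
  assumes f: "Linf f" and h: "Linf h"
    and four: "\<And>m. \<bar>m\<bar> \<le> int N \<Longrightarrow> fourier f m = fourier h m"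
    and I: "finite I" and mm: "\<And>x. x \<in> I \<Longrightarrow> \<bar>mm x\<bar> \<le> int N"
    and g: "\<And>\<theta>. k \<theta> = (\<Sum>x\<in>I. d x * cis (of_int (mm x) * \<theta>))"
  shows "integral\<^sup>L MT (\<lambda>\<theta>. f (cis \<theta>) * k \<theta>) = integral\<^sup>L MT (\<lambda>\<theta>. h (cis \<theta>) * k \<theta>)"
proof -
  have cc: "continuous_on UNIV (\<lambda>\<theta>. cis (of_int z * \<theta>))" for z
    by (intro continuous_intros)
  have e: "integral\<^sup>L MT (\<lambda>\<theta>. F (cis \<theta>) * k \<theta>) = (\<Sum>x\<in>I. d x * (2 * pi * fourier F (- mm x)))"
    if F: "Linf F" for F
  proof -
    have "integral\<^sup>L MT (\<lambda>\<theta>. F (cis \<theta>) * k \<theta>) = integral\<^sup>L MT (\<lambda>\<theta>. \<Sum>x\<in>I. d x * (F (cis \<theta>) * cis (of_int (mm x) * \<theta>)))"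
      by (simp add: g sum_distrib_left mult_ac)
    also have "\<dots> = (\<Sum>x\<in>I. integral\<^sup>L MT (\<lambda>\<theta>. d x * (F (cis \<theta>) * cis (of_int (mm x) * \<theta>))))"
      by (rule Bochner_Integration.integral_sum) (intro integrable_mult_right Linf_integrable[OF F cc])
    also have "\<dots> = (\<Sum>x\<in>I. d x * (2 * pi * fourier F (- mm x)))"
      by (simp add: fourier_int)
    finally show ?thesis .
  qed
  have "(\<Sum>x\<in>I. d x * (2 * pi * fourier f (- mm x))) = (\<Sum>x\<in>I. d x * (2 * pi * fourier h (- mm x)))"
    by (rule sum.cong) (auto simp: four mm)
  then show ?thesis using e[OF f] e[OF h] by simp
qed




definition trig :: "int \<Rightarrow> (real \<Rightarrow> complex) \<Rightarrow> bool" where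
  "trig N k \<longleftrightarrow> (\<exists>d. \<forall>\<theta>. k \<theta> = (\<Sum>m\<in>{-N..N}. d m * cis (of_int m * \<theta>)))"

lemma trig_single: assumes "\<bar>m0\<bar> \<le> N" shows "trig N (\<lambda>\<theta>. c * cis (of_int m0 * \<theta>))"
  unfolding trig_def
proof (intro exI allI)
  fix \<theta>
  have "(\<Sum>m\<in>{-N..N}. (if m = m0 then c else 0) * cis (of_int m * \<theta>))
      = (\<Sum>m\<in>{-N..N}. if m = m0 then c * cis (of_int m0 * \<theta>) else 0)"
    by (rule sum.cong) auto
  also have "\<dots> = c * cis (of_int m0 * \<theta>)" using assms by (simp add: sum.delta abs_le_iff)
  finally show "c * cis (of_int m0 * \<theta>) = (\<Sum>m\<in>{-N..N}. (if m = m0 then c else 0) * cis (of_int m * \<theta>))" by simp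
qed

lemma trig_zero: "trig N (\<lambda>\<theta>. 0)"
  unfolding trig_def by (intro exI[of _ "\<lambda>m. 0"]) simp

lemma trig_add: assumes "trig N k" "trig N l" shows "trig N (\<lambda>\<theta>. k \<theta> + l \<theta>)"
proof -
  obtain d where d: "\<And>\<theta>. k \<theta> = (\<Sum>m\<in>{-N..N}. d m * cis (of_int m * \<theta>))" using assms(1) by (auto simp: trig_def)
  obtain e where e: "\<And>\<theta>. l \<theta> = (\<Sum>m\<in>{-N..N}. e m * cis (of_int m * \<theta>))" using assms(2) by (auto simp: trig_def)
  show ?thesis unfolding trig_def
    by (intro exI[of _ "\<lambda>m. d m + e m"] allI) (simp add: d e distrib_right sum.distrib)
qed

lemma trig_scale: assumes "trig N k" shows "trig N (\<lambda>\<theta>. c * k \<theta>)"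
proof -
  obtain d where d: "\<And>\<theta>. k \<theta> = (\<Sum>m\<in>{-N..N}. d m * cis (of_int m * \<theta>))" using assms(1) by (auto simp: trig_def)
  show ?thesis unfolding trig_def
    by (intro exI[of _ "\<lambda>m. c * d m"] allI) (simp add: d sum_distrib_left mult_ac)
qed

lemma trig_sum: assumes "finite A" "\<And>x. x \<in> A \<Longrightarrow> trig N (k x)"
  shows "trig N (\<lambda>\<theta>. \<Sum>x\<in>A. k x \<theta>)"
  using assms by (induction A rule: finite_induct) (auto intro: trig_zero trig_add)

lemma trig_cnj: assumes "trig N k" shows "trig N (\<lambda>\<theta>. cnj (k \<theta>))"
proof -
  obtain d where d: "\<And>\<theta>. k \<theta> = (\<Sum>m\<in>{-N..N}. d m * cis (of_int m * \<theta>))" using assms(1) by (auto simp: trig_def)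
  show ?thesis unfolding trig_def
  proof (intro exI[of _ "\<lambda>m. cnj (d (- m))"] allI)
    fix \<theta>
    have "cnj (k \<theta>) = (\<Sum>m\<in>{-N..N}. cnj (d m) * cis (of_int (- m) * \<theta>))"
      by (simp add: d cis_cnj)
    also have "\<dots> = (\<Sum>m\<in>{-N..N}. cnj (d (- m)) * cis (of_int m * \<theta>))"
      by (rule sum.reindex_bij_witness[of _ uminus uminus]) auto
    finally show "cnj (k \<theta>) = (\<Sum>m\<in>{-N..N}. cnj (d (- m)) * cis (of_int m * \<theta>))" .
  qed
qed

lemma of_real_Im: "complex_of_real (Im z) = - (\<i> / 2) * z + (\<i> / 2) * cnj z"
  by (simp add: complex_eq_iff)

definition PP :: "(nat \<Rightarrow> complex) \<Rightarrow> nat \<Rightarrow> complex poly" where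
  "PP a n = (\<Prod>k<n. [:- a k, 1:])"
definition QQ :: "(nat \<Rightarrow> complex) \<Rightarrow> nat \<Rightarrow> complex poly" where
  "QQ a n = (\<Prod>k<n. [:1, - a k:])"
definition XX :: "complex \<Rightarrow> (nat \<Rightarrow> complex) \<Rightarrow> nat \<Rightarrow> real \<Rightarrow> complex" where
  "XX lam a n \<theta> = lam * poly (PP a n) (cis \<theta>) * poly (QQ a n) (cis (- \<theta>))"
definition gg :: "complex \<Rightarrow> (nat \<Rightarrow> complex) \<Rightarrow> nat \<Rightarrow> real \<Rightarrow> real" where
  "gg lam a n \<theta> = Im (XX lam a n \<theta>)"

lemma degree_PP: "degree (PP a n) \<le> n"
proof -
  have "degree (PP a n) \<le> sum (degree \<circ> (\<lambda>k. [:- a k, 1:])) {..<n}"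
    unfolding PP_def by (rule degree_prod_sum_le) simp
  also have "\<dots> = n" by simp
  finally show ?thesis .
qed

lemma degree_QQ: "degree (QQ a n) \<le> n"
proof -
  have "degree (QQ a n) \<le> sum (degree \<circ> (\<lambda>k. [:1, - a k:])) {..<n}"
    unfolding QQ_def by (rule degree_prod_sum_le) simp
  also have "\<dots> \<le> sum (\<lambda>k. 1) {..<n}" by (rule sum_mono) simp
  also have "\<dots> = n" by simp
  finally show ?thesis .
qed

lemma XX_trig: "trig (int n) (XX lam a n)"
proof -
  define dP where "dP = degree (PP a n)"
  define dQ where "dQ = degree (QQ a n)"
  have e: "XX lam a n \<theta> = (\<Sum>i\<le>dP. \<Sum>j\<le>dQ. (lam * coeff (PP a n) i * coeff (QQ a n) j) * cis (of_int (int i - int j) * \<theta>))" for \<theta>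
  proof -
    have "XX lam a n \<theta> = lam * ((\<Sum>i\<le>dP. coeff (PP a n) i * cis \<theta> ^ i) * (\<Sum>j\<le>dQ. coeff (QQ a n) j * cis (- \<theta>) ^ j))"
      by (simp add: XX_def poly_altdef dP_def dQ_def)
    also have "\<dots> = lam * (\<Sum>i\<le>dP. \<Sum>j\<le>dQ. coeff (PP a n) i * cis \<theta> ^ i * (coeff (QQ a n) j * cis (- \<theta>) ^ j))"
      by (simp add: sum_product)
    also have "\<dots> = (\<Sum>i\<le>dP. \<Sum>j\<le>dQ. (lam * coeff (PP a n) i * coeff (QQ a n) j) * cis (of_int (int i - int j) * \<theta>))"
    proof -
      have cc: "cis \<theta> ^ i * cis (- \<theta>) ^ j = cis (of_int (int i - int j) * \<theta>)" for i j
      proof -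
        have "cis \<theta> ^ i * cis (- \<theta>) ^ j = cis (real i * \<theta>) * cis (real j * - \<theta>)"
          by (simp only: Complex.DeMoivre)
        also have "\<dots> = cis (of_int (int i - int j) * \<theta>)" by (simp add: cis_mult algebra_simps)
        finally show ?thesis .
      qed
      have tt: "lam * (coeff (PP a n) i * cis \<theta> ^ i * (coeff (QQ a n) j * cis (- \<theta>) ^ j))
          = (lam * coeff (PP a n) i * coeff (QQ a n) j) * cis (of_int (int i - int j) * \<theta>)" for i j
      proof -
        have tt: "lam * (coeff (PP a n) i * cis \<theta> ^ i * (coeff (QQ a n) j * cis (- \<theta>) ^ j))
          = (lam * coeff (PP a n) i * coeff (QQ a n) j) * (cis \<theta> ^ i * cis (- \<theta>) ^ j)"
          by (simp only: mult_ac)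
        then show ?thesis using cc[of i j] by simp
      qed
      show ?thesis by (simp only: sum_distrib_left tt)
    qed
    finally show ?thesis .
  qed
  have "trig (int n) (\<lambda>\<theta>. \<Sum>i\<le>dP. \<Sum>j\<le>dQ. (lam * coeff (PP a n) i * coeff (QQ a n) j) * cis (of_int (int i - int j) * \<theta>))"
  proof (intro trig_sum trig_single finite_atMost)
    fix i j assume "i \<in> {..dP}" "j \<in> {..dQ}"
    then have "i \<le> n" "j \<le> n" using degree_PP[of a n] degree_QQ[of a n] by (auto simp: dP_def dQ_def)
    then show "\<bar>int i - int j\<bar> \<le> int n" by linarith
  qed
  moreover have "XX lam a n = (\<lambda>\<theta>. \<Sum>i\<le>dP. \<Sum>j\<le>dQ. (lam * coeff (PP a n) i * coeff (QQ a n) j) * cis (of_int (int i - int j) * \<theta>))"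
    by (rule ext) (rule e)
  ultimately show ?thesis by simp
qed

lemma gg_trig: "trig (int n) (\<lambda>\<theta>. complex_of_real (gg lam a n \<theta>))"
proof -
  have "trig (int n) (\<lambda>\<theta>. - (\<i> / 2) * XX lam a n \<theta> + (\<i> / 2) * cnj (XX lam a n \<theta>))"
    by (intro trig_add trig_scale trig_cnj XX_trig)
  then show ?thesis by (simp add: gg_def of_real_Im)
qed

lemma LINT_MT_real: fixes F :: "real \<Rightarrow> real"
  shows "(LINT \<theta>:{0..2*pi}|lborel. F \<theta>) = integral\<^sup>L MT F"
  unfolding set_lebesgue_integral_def by (rule integral_restrict_space[OF MT_sets, symmetric])

lemma cont_integrable_real:
  fixes h :: "real \<Rightarrow> real"
  assumes h: "continuous_on UNIV h" shows "integrable MT h"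
proof -
  obtain B where B: "\<forall>\<theta>\<in>{0..2*pi}. norm (h \<theta>) \<le> B" using cont_bounded_MT[OF h] by blast
  have hm: "h \<in> borel_measurable MT"
    by (rule measurable_restrict_space1) (use borel_measurable_continuous_onI[OF h] in simp)
  have "AE \<theta> in MT. norm (h \<theta>) \<le> B"
    by (subst AE_restrict_space_iff[OF MT_sets]) (use B in auto)
  then show ?thesis using hm by (rule finite_measure.integrable_const_bound[OF finite_MT])
qed

lemma Qfac_ne: assumes "norm b < 1" shows "1 - cnj b * cis t \<noteq> 0"
proof
  assume "1 - cnj b * cis t = 0"
  then have "cnj b * cis t = 1" by simp
  then have "norm (cnj b * cis t) = 1" by simp
  then show False using assms by (simp add: norm_mult)
qed

lemma gg_eq: assumes bl: "is_blaschke lam a n"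
  shows "gg lam a n t = sin (Phi lam a n t) * (norm (\<Prod>k<n. 1 - cnj (a k) * cis t))^2"
proof -
  have a: "\<And>k. k < n \<Longrightarrow> norm (a k) < 1" using bl by (auto simp: is_blaschke_def)
  define Qv where "Qv = (\<Prod>k<n. 1 - cnj (a k) * cis t)"
  define Pv where "Pv = (\<Prod>k<n. cis t - a k)"
  have Qv0: "Qv \<noteq> 0" unfolding Qv_def using a Qfac_ne by (auto simp: prod_zero_iff)
  have pP: "poly (PP a n) (cis t) = Pv" by (simp add: PP_def poly_prod Pv_def)
  have pQ: "poly (QQ a n) (cis (- t)) = cnj Qv"
    by (simp add: QQ_def poly_prod Qv_def cnj_prod cis_cnj mult.commute)
  have bv: "blaschke lam a n (cis t) = lam * Pv / Qv"
    by (simp add: blaschke_def prod_dividef Pv_def Qv_def)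
  have "XX lam a n t = lam * Pv * cnj Qv" by (simp add: XX_def pP pQ)
  also have "\<dots> = (lam * Pv / Qv) * (Qv * cnj Qv)" using Qv0 by (simp add: field_simps)
  also have "\<dots> = cis (Phi lam a n t) * complex_of_real ((norm Qv)^2)"
  proof -
    have qq: "Qv * cnj Qv = complex_of_real ((norm Qv)^2)" by (simp add: complex_mult_cnj cmod_power2)
    show ?thesis by (simp only: bv[symmetric] blaschke_cis[OF bl] qq)
  qed
  finally show ?thesis by (simp add: gg_def Qv_def)
qed

lemma sgn_gg: assumes bl: "is_blaschke lam a n"
  shows "sgn (gg lam a n t) = sgn (sin (Phi lam a n t))"
proof -
  have a: "\<And>k. k < n \<Longrightarrow> norm (a k) < 1" using bl by (auto simp: is_blaschke_def)
  have "(\<Prod>k<n. 1 - cnj (a k) * cis t) \<noteq> 0" using a Qfac_ne by (auto simp: prod_zero_iff)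
  then have "(norm (\<Prod>k<n. 1 - cnj (a k) * cis t))^2 > 0" by simp
  then show ?thesis by (simp add: gg_eq[OF bl] sgn_mult)
qed

lemma gg_cont: "continuous_on UNIV (gg lam a n)"
proof -
  obtain d where d: "\<And>\<theta>. complex_of_real (gg lam a n \<theta>) = (\<Sum>m\<in>{-int n..int n}. d m * cis (of_int m * \<theta>))"
    using gg_trig[of n lam a] by (auto simp: trig_def)
  have "gg lam a n = (\<lambda>\<theta>. Re (\<Sum>m\<in>{-int n..int n}. d m * cis (of_int m * \<theta>)))"
    by (rule ext) (metis d Re_complex_of_real)
  moreover have "continuous_on UNIV (\<lambda>\<theta>. Re (\<Sum>m\<in>{-int n..int n}. d m * cis (of_int m * \<theta>)))"
    by (intro continuous_intros)
  ultimately show ?thesis by simp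
qed

lemma gg_point: assumes bl: "is_blaschke lam a n" and n1: "1 \<le> n"
  shows "\<exists>t\<in>{0..2*pi}. gg lam a n t \<noteq> 0"
proof -
  define P where "P = Phi lam a n"
  have cont: "\<And>x. isCont P x" unfolding P_def by (rule Phi_cont[OF bl])
  define m where "m = \<lceil>P 0 / pi\<rceil>"
  have m1: "P 0 \<le> of_int m * pi"
  proof -
    have "P 0 / pi \<le> of_int m" unfolding m_def by (rule le_of_int_ceiling)
    then show ?thesis using pi_gt_zero by (simp add: divide_le_eq)
  qed
  have m2: "of_int m * pi < P 0 + pi"
  proof -
    have "of_int m < P 0 / pi + 1" unfolding m_def using ceiling_correct[of "P 0 / pi"] by linarith
    then show ?thesis using pi_gt_zero by (simp add: field_simps)
  qed
  have P2: "P (2 * pi) = P 0 + 2 * pi * n" using Phi_periodic[of lam a n 0] by (simp add: P_def)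
  have nn: "2 * pi \<le> 2 * pi * real n" using n1 pi_gt_zero by simp
  obtain t where t: "0 \<le> t" "t \<le> 2 * pi" "P t = of_int m * pi + pi / 2"
    using IVT[of P 0 "of_int m * pi + pi / 2" "2 * pi"] m1 m2 P2 nn cont pi_gt_zero by force
  have "sgn (sin (P t)) = (if even m then 1 else -1)"
    by (rule sgn_sin_int) (use t pi_gt_zero in \<open>auto simp: algebra_simps\<close>)
  then have "sgn (gg lam a n t) \<noteq> 0" using sgn_gg[OF bl, of t] by (simp add: P_def)
  then show ?thesis using t by (intro bexI[of _ t]) auto
qed

lemma gg_int_pos: assumes bl: "is_blaschke lam a n" and n1: "1 \<le> n"
  shows "integral\<^sup>L MT (\<lambda>\<theta>. \<bar>gg lam a n \<theta>\<bar>) > 0"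
proof -
  define h where "h = (\<lambda>\<theta>. \<bar>gg lam a n \<theta>\<bar>)"
  have hc: "continuous_on UNIV h" unfolding h_def by (intro continuous_intros gg_cont)
  have hc2: "continuous_on {0..2*pi} h" using hc by (rule continuous_on_subset) simp
  have si: "set_integrable lborel {0..2*pi} h"
    unfolding set_integrable_def by (rule borel_integrable_compact[OF compact_Icc hc2])
  have eq: "integral\<^sup>L MT h = integral {0..2*pi} h"
    using LINT_MT_real[of h] set_borel_integral_eq_integral(2)[OF si] by simp
  have hi: "(h has_integral integral {0..2*pi} h) {0..2*pi}"
    using set_borel_integral_eq_integral(1)[OF si] by (rule integrable_integral)
  have nonneg: "integral\<^sup>L MT h \<ge> 0" unfolding h_def by (rule Bochner_Integration.integral_nonneg) simp
  obtain t where t: "t \<in> {0..2*pi}" "gg lam a n t \<noteq> 0" using gg_point[OF bl n1] by blast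
  have "integral\<^sup>L MT h \<noteq> 0"
  proof
    assume z: "integral\<^sup>L MT h = 0"
    have hz: "(h has_integral 0) (cbox 0 (2*pi))" using hi z eq by (simp add: cbox_interval)
    have "h t = 0"
    proof (rule has_integral_0_cbox_imp_0[OF _ _ hz])
      show "continuous_on (cbox 0 (2*pi)) h" using hc2 by (simp add: cbox_interval)
      show "\<And>x. x \<in> box 0 (2*pi) \<Longrightarrow> 0 \<le> h x" by (simp add: h_def)
      have "pi \<in> box 0 (2*pi)" using pi_gt_zero by (simp add: box_real)
      then show "box 0 (2*pi) \<noteq> {}" by blast
      show "t \<in> cbox 0 (2*pi)" using t by (simp add: cbox_interval)
    qed
    then show False using t by (simp add: h_def)
  qed
  then show ?thesis using nonneg unfolding h_def by linarith
qed




lemma main_bound: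
  assumes bl: "is_blaschke lam a n" and n1: "1 \<le> n" and nN: "n \<le> N" and c: "0 < c"
    and psi: "\<And>\<theta>. \<psi> (cis \<theta>) = complex_of_real (c * sgn (sin (Phi lam a n \<theta>)))"
    and Lpsi: "Linf \<psi>" and f: "Linf f"
    and four: "\<And>m. \<bar>m\<bar> \<le> int N \<Longrightarrow> fourier f m = fourier \<psi> m"
    and bound: "AE \<theta> in lborel. \<theta> \<in> {0..2*pi} \<longrightarrow> norm (f (cis \<theta>)) \<le> M0"
  shows "c \<le> M0"
proof -
  define g where "g = gg lam a n"
  define k where "k = (\<lambda>\<theta>. complex_of_real (g \<theta>))"
  obtain d where d: "\<And>\<theta>. k \<theta> = (\<Sum>m\<in>{-int n..int n}. d m * cis (of_int m * \<theta>))"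
    using gg_trig[of n lam a] by (auto simp: trig_def k_def g_def)
  have gc: "continuous_on UNIV g" unfolding g_def by (rule gg_cont)
  have kc: "continuous_on UNIV k" unfolding k_def by (intro continuous_intros gc)
  have E1: "integral\<^sup>L MT (\<lambda>\<theta>. f (cis \<theta>) * k \<theta>) = integral\<^sup>L MT (\<lambda>\<theta>. \<psi> (cis \<theta>) * k \<theta>)"
    by (rule trig_int_eq[where mm="\<lambda>m. m", OF f Lpsi four _ _ d]) (use nN in auto)
  have pk: "\<psi> (cis \<theta>) * k \<theta> = complex_of_real (c * \<bar>g \<theta>\<bar>)" for \<theta>
  proof -
    have e: "sgn (g \<theta>) = sgn (sin (Phi lam a n \<theta>))" unfolding g_def by (rule sgn_gg[OF bl])
    have s: "sgn (g \<theta>) * g \<theta> = \<bar>g \<theta>\<bar>" by (simp add: sgn_if)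
    have "c * sgn (sin (Phi lam a n \<theta>)) * g \<theta> = c * \<bar>g \<theta>\<bar>"
      by (simp only: e[symmetric] mult.assoc s)
    then have "complex_of_real (c * sgn (sin (Phi lam a n \<theta>))) * complex_of_real (g \<theta>) = complex_of_real (c * \<bar>g \<theta>\<bar>)"
      by (simp only: of_real_mult[symmetric])
    then show ?thesis by (simp only: psi k_def)
  qed
  define G where "G = integral\<^sup>L MT (\<lambda>\<theta>. \<bar>g \<theta>\<bar>)"
  have Gpos: "G > 0" unfolding G_def g_def by (rule gg_int_pos[OF bl n1])
  have E2: "integral\<^sup>L MT (\<lambda>\<theta>. \<psi> (cis \<theta>) * k \<theta>) = complex_of_real (c * G)"
    by (simp add: pk G_def)
  have gi: "integrable MT (\<lambda>\<theta>. \<bar>g \<theta>\<bar>)" by (rule cont_integrable_real) (intro continuous_intros gc)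
  have fki: "integrable MT (\<lambda>\<theta>. f (cis \<theta>) * k \<theta>)" by (rule Linf_integrable[OF f kc])
  have "c * G = norm (complex_of_real (c * G))" using c Gpos by (simp only: norm_of_real) simp
  also have "\<dots> = norm (integral\<^sup>L MT (\<lambda>\<theta>. f (cis \<theta>) * k \<theta>))"
    by (simp only: E1 E2)
  also have "\<dots> \<le> integral\<^sup>L MT (\<lambda>\<theta>. norm (f (cis \<theta>) * k \<theta>))" by (rule integral_norm_bound)
  also have "\<dots> \<le> integral\<^sup>L MT (\<lambda>\<theta>. M0 * \<bar>g \<theta>\<bar>)"
  proof (rule integral_mono_AE)
    show "integrable MT (\<lambda>\<theta>. norm (f (cis \<theta>) * k \<theta>))" by (rule integrable_norm[OF fki])
    show "integrable MT (\<lambda>\<theta>. M0 * \<bar>g \<theta>\<bar>)" by (rule integrable_mult_right[OF gi])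
    have "AE \<theta> in lborel. \<theta> \<in> {0..2*pi} \<longrightarrow> norm (f (cis \<theta>) * k \<theta>) \<le> M0 * \<bar>g \<theta>\<bar>"
      using bound
    proof eventually_elim
      case (elim \<theta>)
      show ?case
      proof
        assume "\<theta> \<in> {0..2*pi}"
        then have "norm (f (cis \<theta>)) \<le> M0" using elim by blast
        then show "norm (f (cis \<theta>) * k \<theta>) \<le> M0 * \<bar>g \<theta>\<bar>"
          by (simp add: k_def norm_mult mult_right_mono)
      qed
    qed
    then show "AE \<theta> in MT. norm (f (cis \<theta>) * k \<theta>) \<le> M0 * \<bar>g \<theta>\<bar>"
      by (subst AE_restrict_space_iff[OF MT_sets])
  qed
  also have "\<dots> = M0 * G" by (simp add: G_def)
  finally have "c * G \<le> M0 * G" .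
  then show ?thesis using Gpos by simp
qed

lemma G_four:
  assumes "f \<in> G_set A N" "A = (\<lambda>j k. fourier \<psi> (int j - int k))" "\<bar>m\<bar> \<le> int N"
  shows "fourier f m = fourier \<psi> m"
proof -
  have h: "\<And>j k. j \<le> N \<Longrightarrow> k \<le> N \<Longrightarrow> fourier f (int j - int k) = fourier \<psi> (int j - int k)"
    using assms(1,2) by (auto simp: G_set_def)
  show ?thesis
  proof (cases "m \<ge> 0")
    case True
    then show ?thesis using h[of "nat m" 0] assms(3) by simp
  next
    case False
    then show ?thesis using h[of 0 "nat (- m)"] assms(3) by simp
  qed
qed

theorem mainTheorem2:
  fixes N n :: nat and lam :: complex and a :: "nat \<Rightarrow> complex" and c :: real
    and w \<psi> :: "complex \<Rightarrow> complex" and A :: "nat \<Rightarrow> nat \<Rightarrow> complex"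
  assumes "0 < N" and "1 \<le> n" and "n \<le> N"
    and "is_blaschke lam a n"
    and "0 < c"
    and "w = blaschke lam a n"
    and "\<psi> = (\<lambda>\<zeta>. complex_of_real (2 * c / pi * Arg ((1 + w \<zeta>) / (1 - w \<zeta>))))"
    and "A = (\<lambda>j k. fourier \<psi> (int j - int k))"
  shows "alt_step \<psi> c n \<and> \<psi> \<in> G_set A N \<and> ess_norm \<psi> = c \<and> c_A A N = c"
proof -
  note bl = assms(4) and n1 = assms(2) and nN = assms(3) and c = assms(5)
  have psi: "\<And>\<theta>. \<psi> (cis \<theta>) = complex_of_real (c * sgn (sin (Phi lam a n \<theta>)))"
  proof -
    fix \<theta>
    have "\<psi> (cis \<theta>) = complex_of_real (2 * c / pi * Arg ((1 + cis (Phi lam a n \<theta>)) / (1 - cis (Phi lam a n \<theta>))))"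
      using assms(6,7) blaschke_cis[OF bl] by simp
    then show "\<psi> (cis \<theta>) = complex_of_real (c * sgn (sin (Phi lam a n \<theta>)))"
      using psi_formula[OF c] by simp
  qed
  have alt: "alt_step \<psi> c n" by (rule alt_step_main[OF bl n1 c psi])
  have Pc: "continuous_on UNIV (Phi lam a n)"
    using Phi_cont[OF bl] by (simp add: continuous_at_imp_continuous_on)
  have Pm [measurable]: "Phi lam a n \<in> borel_measurable borel"
    by (rule borel_measurable_continuous_onI[OF Pc])
  have m0: "(\<lambda>\<theta>. complex_of_real (c * sgn (sin (Phi lam a n \<theta>)))) \<in> borel_measurable borel"
    by measurable
  have meas: "(\<lambda>\<theta>. \<psi> (cis \<theta>)) \<in> borel_measurable MT"
    unfolding psi by (rule measurable_restrict_space1) (use m0 in simp)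
  have bnd: "AE \<theta> in lborel. \<theta> \<in> {0..2*pi} \<longrightarrow> norm (\<psi> (cis \<theta>)) \<le> c"
    by (rule AE_I2) (use c in \<open>auto simp: psi sgn_if\<close>)
  have Lpsi: "Linf \<psi>" unfolding Linf_def using meas bnd by blast
  have Gpsi: "\<psi> \<in> G_set A N" unfolding G_set_def using Lpsi assms(8) by simp
  have low: "c \<le> M" if f: "f \<in> G_set A N" and M: "AE \<theta> in lborel. \<theta> \<in> {0..2*pi} \<longrightarrow> norm (f (cis \<theta>)) \<le> M" for f M
  proof (rule main_bound[OF bl n1 nN c psi Lpsi _ _ M])
    show "Linf f" using f by (simp add: G_set_def)
    show "\<And>m. \<bar>m\<bar> \<le> int N \<Longrightarrow> fourier f m = fourier \<psi> m"
      by (rule G_four[OF f assms(8)])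
  qed
  have ess_ge: "c \<le> ess_norm f" if f: "f \<in> G_set A N" for f
  proof -
    obtain M where "AE \<theta> in lborel. \<theta> \<in> {0..2*pi} \<longrightarrow> norm (f (cis \<theta>)) \<le> M"
      using f by (auto simp: G_set_def Linf_def)
    then have ne: "{M. AE \<theta> in lborel. \<theta> \<in> {0..2*pi} \<longrightarrow> norm (f (cis \<theta>)) \<le> M} \<noteq> {}" by blast
    show ?thesis unfolding ess_norm_def
      by (rule cInf_greatest[OF ne]) (use low[OF f] in blast)
  qed
  have ess: "ess_norm \<psi> = c"
    unfolding ess_norm_def
  proof (rule cInf_eq_minimum)
    show "c \<in> {M. AE \<theta> in lborel. \<theta> \<in> {0..2*pi} \<longrightarrow> norm (\<psi> (cis \<theta>)) \<le> M}" using bnd by simp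
    show "\<And>x. x \<in> {M. AE \<theta> in lborel. \<theta> \<in> {0..2*pi} \<longrightarrow> norm (\<psi> (cis \<theta>)) \<le> M} \<Longrightarrow> c \<le> x"
      using low[OF Gpsi] by blast
  qed
  have cA: "c_A A N = c"
    unfolding c_A_def
  proof (rule cInf_eq_minimum)
    show "c \<in> ess_norm ` G_set A N" using Gpsi ess by (metis image_eqI)
    show "\<And>x. x \<in> ess_norm ` G_set A N \<Longrightarrow> c \<le> x" using ess_ge by blast
  qed
  show ?thesis using alt Gpsi ess cA by blast
qed


end
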